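(* Let $A:\mathbb{R}^d\rightrightarrows\mathbb{R}^d$ be maximal monotone with $A^{-1}(0)\neq\emptyset$, let $p\geq1$ be an integer, $\sigma\in(0,1)$, $\theta>0$, $x_0\in\mathbb{R}^d\setminus A^{-1}(0)$, and suppose $\lambda_k>0$, $y_k,v_k,x_k\in\mathbb{R}^d$, $\epsilon_k\geq0$ satisfy for every $k\geq0$: $v_{k+1}\in A^{\epsilon_{k+1}}(y_{k+1})$, $\|\lambda_{k+1}v_{k+1}+y_{k+1}-x_k\|^2+2\lambda_{k+1}\epsilon_{k+1}\leq\sigma^2\|y_{k+1}-x_k\|^2$, $\lambda_{k+1}\|y_{k+1}-x_k\|^{p-1}\geq\theta$, and $x_{k+1}=x_k-\lambda_{k+1}v_{k+1}$. Then for every integer $k\geq1$, \[ \sum_{i=1}^k\lambda_i\geq\theta\left(\frac{1-\sigma^2}{\inf_{z^\star\in A^{-1}(0)}\|x_0-z^\star\|^2}\right)^{\frac{p-1}{2}}k^{\frac{p+1}{2}}. \]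
   Context: The $\epsilon$-enlargement is $A^{\epsilon}(x)=\{v\in\mathbb{R}^d:\langle x-\tilde x,v-\tilde v\rangle\geq-\epsilon\ \forall\tilde x\in\mathbb{R}^d,\ \forall\tilde v\in A\tilde x\}$. *)

theory Defs
  imports "HOL-Analysis.Analysis"
begin

definition monotone_op :: "('a::real_inner \<Rightarrow> 'a set) \<Rightarrow> bool" where
  "monotone_op A \<longleftrightarrow>
     (\<forall>x y u v. u \<in> A x \<longrightarrow> v \<in> A y \<longrightarrow> inner (x - y) (u - v) \<ge> 0)"

definition maximal_monotone :: "('a::real_inner \<Rightarrow> 'a set) \<Rightarrow> bool" where
  "maximal_monotone A \<longleftrightarrow> monotone_op A \<and>
     (\<forall>B. monotone_op B \<and> (\<forall>x. A x \<subseteq> B x) \<longrightarrow> B = A)"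

definition enlargement :: "('a::real_inner \<Rightarrow> 'a set) \<Rightarrow> real \<Rightarrow> 'a \<Rightarrow> 'a set" where
  "enlargement A \<epsilon> x =
     {v. \<forall>x' v'. v' \<in> A x' \<longrightarrow> inner (x - x') (v - v') \<ge> - \<epsilon>}"

definition zeros_op :: "('a::real_vector \<Rightarrow> 'a set) \<Rightarrow> 'a set" where
  "zeros_op A = {z. 0 \<in> A z}"

end

theory Submission imports Defs begin

lemma step_ineq:
  fixes a b w z :: "'a::real_inner"
  assumes h1: "inner (b - z) w \<ge> - e" and h2: "(norm (w + b - a))\<^sup>2 + 2 * e \<le> s * (norm (b - a))\<^sup>2"
  shows "(norm (a - w - z))\<^sup>2 \<le> (norm (a - z))\<^sup>2 - (1 - s) * (norm (b - a))\<^sup>2"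
proof -
  have e1: "(norm (a - w - z))\<^sup>2 = (norm (a - z))\<^sup>2 + (norm (w + b - a))\<^sup>2 - (norm (b - a))\<^sup>2 - 2 * inner (b - z) w"
    unfolding power2_norm_eq_inner
    by (simp add: inner_diff_left inner_diff_right inner_add_left inner_add_right inner_commute)
  have e2: "(1 - s) * (norm (b - a))\<^sup>2 = (norm (b - a))\<^sup>2 - s * (norm (b - a))\<^sup>2"
    by (simp only: left_diff_distrib mult_1)
  show ?thesis using e1 e2 h1 h2 by linarith
qed

lemma convex_powr_neg:
  assumes r: "r > 0" shows "convex_on {0<..} (\<lambda>x::real. x powr (- r))"
proof (rule f''_ge0_imp_convex)
  show "convex ({0<..} :: real set)" by simp
  show "((\<lambda>x. x powr (- r)) has_real_derivative (- r) * x powr (- r - 1)) (at x)"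
    if "x \<in> {0<..}" for x :: real
    using has_real_derivative_powr[of x "- r"] that by simp
  show "((\<lambda>x. (- r) * x powr (- r - 1)) has_real_derivative (- r) * ((- r - 1) * x powr (- r - 1 - 1))) (at x)"
    if "x \<in> {0<..}" for x :: real
    using has_real_derivative_powr[of x "- r - 1"] that by (intro DERIV_cmult) simp
  show "0 \<le> (- r) * ((- r - 1) * x powr (- r - 1 - 1))" if "x \<in> {0<..}" for x :: real
  proof -
    have t: "0 \<le> x powr (- r - 1 - 1)" by simp
    show ?thesis using r t by (intro mult_nonpos_nonpos mult_nonpos_nonneg) auto
  qed
qed

theorem lemma4p3:
  fixes A :: "'a::euclidean_space \<Rightarrow> 'a set"
    and p :: nat and \<sigma> \<theta> :: real and x0 :: 'a
    and lam \<epsilon> :: "nat \<Rightarrow> real" and y v x :: "nat \<Rightarrow> 'a"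
  assumes mm: "maximal_monotone A"
    and zne: "zeros_op A \<noteq> {}"
    and p: "p \<ge> 1"
    and sigma: "0 < \<sigma>" "\<sigma> < 1"
    and theta: "\<theta> > 0"
    and x0: "x0 \<notin> zeros_op A"
    and x_0: "x 0 = x0"
    and lam_pos: "\<And>k. lam (Suc k) > 0"
    and eps_nonneg: "\<And>k. \<epsilon> (Suc k) \<ge> 0"
    and incl: "\<And>k. v (Suc k) \<in> enlargement A (\<epsilon> (Suc k)) (y (Suc k))"
    and err: "\<And>k. (norm (lam (Suc k) *\<^sub>R v (Suc k) + y (Suc k) - x k))\<^sup>2
                      + 2 * lam (Suc k) * \<epsilon> (Suc k)
                    \<le> \<sigma>\<^sup>2 * (norm (y (Suc k) - x k))\<^sup>2"
    and large: "\<And>k. lam (Suc k) * norm (y (Suc k) - x k) ^ (p - 1) \<ge> \<theta>"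
    and upd: "\<And>k. x (Suc k) = x k - lam (Suc k) *\<^sub>R v (Suc k)"
    and k: "k \<ge> 1"
  shows "(\<Sum>i=1..k. lam i) \<ge>
           \<theta> * ((1 - \<sigma>\<^sup>2) / (INF z\<in>zeros_op A. (norm (x0 - z))\<^sup>2))
                 powr ((real p - 1) / 2)
             * real k powr ((real p + 1) / 2)"
proof -
  define d where "d i = norm (y i - x (i - 1))" for i
  define S where "S = (\<Sum>i=1..k. (d i)\<^sup>2)"
  define D where "D = (INF z\<in>zeros_op A. (norm (x0 - z))\<^sup>2)"
  define c where "c = (1 - \<sigma>\<^sup>2) / D"
  have s2: "\<sigma>\<^sup>2 < 1" using sigma by (simp add: power_less_one_iff)
  have tele: "(norm (x n - z))\<^sup>2 + (1 - \<sigma>\<^sup>2) * (\<Sum>i=1..n. (d i)\<^sup>2) \<le> (norm (x0 - z))\<^sup>2"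
    if z: "z \<in> zeros_op A" for z n
  proof (induction n)
    case 0 then show ?case using x_0 by simp
  next
    case (Suc n)
    have "inner (y (Suc n) - z) (v (Suc n) - 0) \<ge> - \<epsilon> (Suc n)"
      using incl[of n] z unfolding enlargement_def zeros_op_def by blast
    then have "lam (Suc n) * inner (y (Suc n) - z) (v (Suc n)) \<ge> lam (Suc n) * (- \<epsilon> (Suc n))"
      using lam_pos[of n] by (intro mult_left_mono) auto
    then have h1: "inner (y (Suc n) - z) (lam (Suc n) *\<^sub>R v (Suc n)) \<ge> - (lam (Suc n) * \<epsilon> (Suc n))"
      by simp
    have h2: "(norm (lam (Suc n) *\<^sub>R v (Suc n) + y (Suc n) - x n))\<^sup>2 + 2 * (lam (Suc n) * \<epsilon> (Suc n))
        \<le> \<sigma>\<^sup>2 * (norm (y (Suc n) - x n))\<^sup>2" using err[of n] by simp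
    have "(norm (x (Suc n) - z))\<^sup>2 \<le> (norm (x n - z))\<^sup>2 - (1 - \<sigma>\<^sup>2) * (norm (y (Suc n) - x n))\<^sup>2"
      using step_ineq[OF h1 h2] upd[of n] by simp
    moreover have "(\<Sum>i=1..Suc n. (d i)\<^sup>2) = (\<Sum>i=1..n. (d i)\<^sup>2) + (norm (y (Suc n) - x n))\<^sup>2"
      by (simp add: d_def)
    moreover have "(1 - \<sigma>\<^sup>2) * ((\<Sum>i=1..n. (d i)\<^sup>2) + (norm (y (Suc n) - x n))\<^sup>2)
       = (1 - \<sigma>\<^sup>2) * (\<Sum>i=1..n. (d i)\<^sup>2) + (1 - \<sigma>\<^sup>2) * (norm (y (Suc n) - x n))\<^sup>2"
      by (simp only: distrib_left)
    ultimately show ?case using Suc.IH by (smt (verit))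
  qed
  have SD: "(1 - \<sigma>\<^sup>2) * S \<le> D"
    unfolding D_def
  proof (rule cINF_greatest[OF zne])
    fix z assume "z \<in> zeros_op A"
    from tele[OF this, of k] show "(1 - \<sigma>\<^sup>2) * S \<le> (norm (x0 - z))\<^sup>2"
      unfolding S_def using zero_le_power2[of "norm (x k - z)"] by linarith
  qed
  have lamI: "lam i * d i ^ (p - 1) \<ge> \<theta>" if "i \<in> {1..k}" for i
  proof -
    from that obtain j where "i = Suc j" by (cases i) auto
    then show ?thesis using large[of j] by (simp add: d_def)
  qed
  have kpos: "real k > 0" using k by simp
  show ?thesis
  proof (cases "p = 1")
    case True
    have "(\<Sum>i=1..k. \<theta>) \<le> (\<Sum>i=1..k. lam i)"
      using lamI True by (intro sum_mono) auto
    then have "\<theta> * real k \<le> (\<Sum>i=1..k. lam i)" by (simp add: mult.commute)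
    have rhs: "\<theta> * c powr ((real p - 1) / 2) * real k powr ((real p + 1) / 2) \<le> \<theta> * real k"
      using True theta kpos by (cases "c = 0") auto
    show ?thesis using rhs \<open>\<theta> * real k \<le> (\<Sum>i=1..k. lam i)\<close> unfolding c_def D_def by linarith
  next
    case False
    then have p2: "p \<ge> 2" using p by simp
    define r where "r = (real p - 1) / 2"
    have rpos: "r > 0" using p2 unfolding r_def by simp
    have dpos: "d i > 0" if "i \<in> {1..k}" for i
    proof (rule ccontr)
      assume "\<not> d i > 0"
      then have "d i = 0" using norm_ge_zero[of "y i - x (i - 1)"] unfolding d_def by linarith
      moreover have m: "p - 1 = Suc (p - 2)" using p2 by simp
      ultimately have "lam i * d i ^ (p - 1) = 0" by simp
      then show False using lamI[OF that] theta by linarith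
    qed
    have dr: "(d i ^ 2) powr (- r) = 1 / d i ^ (p - 1)" if "i \<in> {1..k}" for i
    proof -
      have di: "d i > 0" using dpos[OF that] .
      have "d i powr 2 = d i ^ 2" using di by (simp add: powr_numeral)
      then have "(d i ^ 2) powr (- r) = (d i powr 2) powr (- r)" by simp
      also have "\<dots> = d i powr (2 * - r)" by (simp only: powr_powr)
      also have "2 * - r = - real (p - 1)" unfolding r_def using p2 by (simp add: of_nat_diff field_simps)
      also have "d i powr (- real (p - 1)) = 1 / d i ^ (p - 1)"
        using di by (simp add: powr_minus powr_realpow divide_inverse)
      finally show ?thesis .
    qed
    have lam_lb: "lam i \<ge> \<theta> * (d i ^ 2) powr (- r)" if "i \<in> {1..k}" for i
    proof -
      have dp: "d i ^ (p - 1) > 0" using dpos[OF that] by simp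
      have "\<theta> * (d i ^ 2) powr (- r) = \<theta> / d i ^ (p - 1)" using dr[OF that] by simp
      also have "\<dots> \<le> lam i" using lamI[OF that] dp by (simp only: pos_divide_le_eq)
      finally show ?thesis .
    qed
    have Spos: "S > 0" unfolding S_def
    proof (rule sum_pos)
      fix i assume "i \<in> {1..k}"
      from dpos[OF this] show "0 < (d i)\<^sup>2" by simp
    qed (use k in auto)
    have cvx: "convex_on {0<..} (\<lambda>x::real. x powr (- r))" using convex_powr_neg[OF rpos] .
    have sum1: "(\<Sum>i\<in>{1..k}. 1 / real k) = 1" using kpos by simp
    have jensen: "(\<Sum>i\<in>{1..k}. (1 / real k) *\<^sub>R (d i ^ 2)) powr (- r)
        \<le> (\<Sum>i\<in>{1..k}. (1 / real k) * ((d i ^ 2) powr (- r)))"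
    proof (rule convex_on_sum[OF _ _ cvx sum1])
      show "finite {1..k}" by simp
      show "{1..k} \<noteq> {}" using k by simp
      show "\<And>i. i \<in> {1..k} \<Longrightarrow> 0 \<le> 1 / real k" by simp
      show "d i ^ 2 \<in> {0<..}" if "i \<in> {1..k}" for i using dpos[OF that] by simp
    qed
    have avg: "(\<Sum>i\<in>{1..k}. (1 / real k) *\<^sub>R (d i ^ 2)) = S / real k"
      unfolding S_def by (simp add: sum_divide_distrib)
    have "(\<Sum>i\<in>{1..k}. (1 / real k) * ((d i ^ 2) powr (- r))) = (\<Sum>i\<in>{1..k}. (d i ^ 2) powr (- r)) / real k"
      by (simp add: sum_divide_distrib)
    then have "(S / real k) powr (- r) \<le> (\<Sum>i\<in>{1..k}. (d i ^ 2) powr (- r)) / real k"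
      using jensen avg by simp
    then have jensen2: "real k * (S / real k) powr (- r) \<le> (\<Sum>i\<in>{1..k}. (d i ^ 2) powr (- r))"
      using kpos by (simp only: le_divide_eq mult.commute)
    have "(S / real k) powr (- r) = inverse (S powr r / real k powr r)"
      by (simp only: powr_minus powr_divide)
    also have "\<dots> = real k powr r * (1 / S powr r)"
      by (simp add: divide_inverse)
    also have "1 / S powr r = (1 / S) powr r" by (simp add: powr_divide)
    finally have "(S / real k) powr (- r) = real k powr r * (1 / S) powr r" .
    then have "real k * (S / real k) powr (- r) = real k powr (1 + r) * (1 / S) powr r"
      using kpos by (simp add: powr_add mult.assoc)
    then have j3: "real k powr (1 + r) * (1 / S) powr r \<le> (\<Sum>i\<in>{1..k}. (d i ^ 2) powr (- r))"
      using jensen2 by simp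
    have cS: "c \<le> 1 / S" and c0: "c \<ge> 0"
    proof -
      have "(1 - \<sigma>\<^sup>2) * S > 0" using Spos s2 by simp
      then have Dp: "D > 0" using SD by linarith
      show "c \<ge> 0" unfolding c_def using Dp s2 by simp
      have "(1 - \<sigma>\<^sup>2) * S \<le> D" using SD .
      then show "c \<le> 1 / S" unfolding c_def using Dp Spos s2
        by (simp add: divide_le_eq le_divide_eq mult.commute)
    qed
    have "c powr r \<le> (1 / S) powr r" using powr_mono2[OF _ c0 cS] rpos by simp
    then have "real k powr (1 + r) * c powr r \<le> real k powr (1 + r) * (1 / S) powr r"
      by (intro mult_left_mono) auto
    also note j3
    finally have "\<theta> * (c powr r * real k powr (1 + r)) \<le> \<theta> * (\<Sum>i\<in>{1..k}. (d i ^ 2) powr (- r))"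
      using theta by (simp add: mult.commute)
    also have "\<dots> \<le> (\<Sum>i=1..k. lam i)"
      unfolding sum_distrib_left by (rule sum_mono, rule lam_lb)
    finally have fin: "\<theta> * (c powr r * real k powr (1 + r)) \<le> (\<Sum>i=1..k. lam i)" .
    have e1: "(real p + 1) / 2 = 1 + r" unfolding r_def by (simp add: add_divide_distrib diff_divide_distrib)
    have e2: "(real p - 1) / 2 = r" unfolding r_def by simp
    show ?thesis using fin unfolding e1 e2 c_def D_def by (simp add: mult.assoc)
  qed
qed

end
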